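(* (1) For every $\theta\in\mathbb{C}^4$, the projective surface $\overline{\mathcal{S}}(\theta)$ is smooth in a neighborhood of $L=L_1\cup L_2\cup L_3$. (2) If $\theta=\mathrm{rh}(\kappa)$ with $\kappa\in\mathcal{K}$, then $\overline{\mathcal{S}}(\theta)$ is smooth everywhere if and only if $\kappa\in\mathcal{K}\setminus\mathrm{Wall}$.
   Context: For $\theta=(\theta_1,\theta_2,\theta_3,\theta_4)\in\mathbb{C}^4$, $\overline{\mathcal{S}}(\theta)\subset\mathbb{P}^3$ is the cubic surface $X_1X_2X_3+X_0(X_1^2+X_2^2+X_3^2)-X_0^2(\theta_1X_1+\theta_2X_2+\theta_3X_3)+\theta_4X_0^3=0$, the closure of the affine surface $x_1x_2x_3+x_1^2+x_2^2+x_3^2-\theta_1x_1-\theta_2x_2-\theta_3x_3+\theta_4=0$ via $x\mapsto[1:x_1:x_2:x_3]$; $L_i=\{X_0=X_i=0\}$ for $i=1,2,3$. $\mathcal{K}=\{\kappa\in\mathbb{C}^5:2\kappa_0+\kappa_1+\kappa_2+\kappa_3+\kappa_4=1\}$; $\mathrm{Wall}$ is the union of the hyperplanes $\kappa_i=m$ ($i=1,\dots,4$, $m\in\mathbb{Z}$) and $\kappa_1\pm\kappa_2\pm\kappa_3\pm\kappa_4=2m+1$ ($m\in\mathbb{Z}$). The map $\mathrm{rh}:\mathcal{K}\to\mathbb{C}^4$ is defined by $a_i=2\cos\pi\kappa_i$ ($i=1,2,3$), $a_4=-2\cos\pi\kappa_4$, $\theta_i=a_ia_4+a_ja_k$ for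 $\{i,j,k\}=\{1,2,3\}$, and $\theta_4=a_1a_2a_3a_4+a_1^2+a_2^2+a_3^2+a_4^2-4$. *)

theory Defs
  imports "HOL-Analysis.Analysis"
begin

text \<open>Points of C^4 (homogeneous coordinates [X0:X1:X2:X3] of P^3) are 4-tuples.
  Parameters theta = (theta 1, ..., theta 4) and kappa = (kappa 0, ..., kappa 4)
  are given as functions on indices; only the listed indices matter.\<close>

type_synonym pt4 = "complex \<times> complex \<times> complex \<times> complex"

definition cubicF :: "(nat \<Rightarrow> complex) \<Rightarrow> complex \<Rightarrow> complex \<Rightarrow> complex \<Rightarrow> complex \<Rightarrow> complex" where
  "cubicF \<theta> X0 X1 X2 X3 =
     X1 * X2 * X3 + X0 * (X1^2 + X2^2 + X3^2)
     - X0^2 * (\<theta> 1 * X1 + \<theta> 2 * X2 + \<theta> 3 * X3) + \<theta> 4 * X0^3"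

definition sing_point :: "(nat \<Rightarrow> complex) \<Rightarrow> pt4 \<Rightarrow> bool" where
  "sing_point \<theta> X = (case X of (X0, X1, X2, X3) \<Rightarrow>
      X \<noteq> 0 \<and> cubicF \<theta> X0 X1 X2 X3 = 0
      \<and> deriv (\<lambda>t. cubicF \<theta> t X1 X2 X3) X0 = 0
      \<and> deriv (\<lambda>t. cubicF \<theta> X0 t X2 X3) X1 = 0
      \<and> deriv (\<lambda>t. cubicF \<theta> X0 X1 t X3) X2 = 0
      \<and> deriv (\<lambda>t. cubicF \<theta> X0 X1 X2 t) X3 = 0)"

text \<open>Cone over L = L1 \<union> L2 \<union> L3, L_i = {X0 = Xi = 0}.\<close>
definition coneL :: "pt4 set" where
  "coneL = {(X0, X1, X2, X3). (X0, X1, X2, X3) \<noteq> 0 \<and> X0 = 0 \<and> (X1 = 0 \<or> X2 = 0 \<or> X3 = 0)}"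

text \<open>Smooth in a neighbourhood of L: there is an open set of C^4 containing the
  cone over L (equivalently, its image, an open subset of P^3 containing L) with
  no singular points of the surface.\<close>
definition smooth_near_L :: "(nat \<Rightarrow> complex) \<Rightarrow> bool" where
  "smooth_near_L \<theta> = (\<exists>U::pt4 set. open U \<and> coneL \<subseteq> U \<and> (\<forall>X\<in>U. \<not> sing_point \<theta> X))"

definition smooth_everywhere :: "(nat \<Rightarrow> complex) \<Rightarrow> bool" where
  "smooth_everywhere \<theta> = (\<forall>X. \<not> sing_point \<theta> X)"

definition Kset :: "(nat \<Rightarrow> complex) set" where
  "Kset = {\<kappa>. 2 * \<kappa> 0 + \<kappa> 1 + \<kappa> 2 + \<kappa> 3 + \<kappa> 4 = 1}"

definition Wall :: "(nat \<Rightarrow> complex) set" where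
  "Wall = {\<kappa>. (\<exists>i\<in>{1,2,3,4::nat}. \<kappa> i \<in> \<int>)
     \<or> (\<exists>s2\<in>{1,-1::complex}. \<exists>s3\<in>{1,-1::complex}. \<exists>s4\<in>{1,-1::complex}. \<exists>m::int.
          \<kappa> 1 + s2 * \<kappa> 2 + s3 * \<kappa> 3 + s4 * \<kappa> 4 = of_int (2 * m + 1))}"

definition rh :: "(nat \<Rightarrow> complex) \<Rightarrow> (nat \<Rightarrow> complex)" where
  "rh \<kappa> = (let a1 = 2 * cos (of_real pi * \<kappa> 1); a2 = 2 * cos (of_real pi * \<kappa> 2);
               a3 = 2 * cos (of_real pi * \<kappa> 3); a4 = - 2 * cos (of_real pi * \<kappa> 4)
           in (\<lambda>i. if i = 1 then a1 * a4 + a2 * a3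
                   else if i = 2 then a2 * a4 + a1 * a3
                   else if i = 3 then a3 * a4 + a1 * a2
                   else if i = 4 then a1 * a2 * a3 * a4 + a1^2 + a2^2 + a3^2 + a4^2 - 4
                   else 0))"

end

theory Submission
  imports Defs
begin


lemma d0: "deriv (\<lambda>t. cubicF \<theta> t X1 X2 X3) X0 = X1^2+X2^2+X3^2 - 2*X0*(\<theta> 1*X1+\<theta> 2*X2+\<theta> 3*X3) + 3*\<theta> 4*X0^2"
  unfolding cubicF_def
  apply (rule DERIV_imp_deriv)
  apply (rule derivative_eq_intros refl)+
  apply (simp add: algebra_simps power2_eq_square)
  done

lemma d1: "deriv (\<lambda>t. cubicF \<theta> X0 t X2 X3) X1 = X2*X3 + 2*X0*X1 - X0^2*\<theta> 1"
  unfolding cubicF_def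
  apply (rule DERIV_imp_deriv)
  apply (rule derivative_eq_intros refl)+
  apply (simp add: algebra_simps power2_eq_square)
  done
lemma d2: "deriv (\<lambda>t. cubicF \<theta> X0 X1 t X3) X2 = X1*X3 + 2*X0*X2 - X0^2*\<theta> 2"
  unfolding cubicF_def
  apply (rule DERIV_imp_deriv)
  apply (rule derivative_eq_intros refl)+
  apply (simp add: algebra_simps power2_eq_square)
  done
lemma d3: "deriv (\<lambda>t. cubicF \<theta> X0 X1 X2 t) X3 = X1*X2 + 2*X0*X3 - X0^2*\<theta> 3"
  unfolding cubicF_def
  apply (rule DERIV_imp_deriv)
  apply (rule derivative_eq_intros refl)+
  apply (simp add: algebra_simps power2_eq_square)
  done


definition E :: "complex \<Rightarrow> complex" where
  "E k = exp (\<i> * of_real pi * k)"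

lemma E_nz: "E k \<noteq> 0" by (simp add: E_def)

lemma E_add: "E (a + b) = E a * E b"
  by (simp add: E_def distrib_left exp_add)

lemma E_neg: "E (- k) = inverse (E k)"
  by (simp add: E_def exp_minus)

lemma E_one: "E 1 = -1" by (simp add: E_def)

lemma cos2: "2 * cos (of_real pi * k) = E k + 1 / E k"
proof -
  have "cos (of_real pi * k) = (exp (\<i> * of_real pi * k) + exp (-(\<i> * of_real pi * k))) / 2"
    using cos_exp_eq[of "of_real pi * k"] by (simp only: mult.assoc)
  then show ?thesis unfolding E_def by (simp add: exp_minus inverse_eq_divide) (metis mult.commute)
qed

lemma E_eq1: assumes "E k = 1" shows "\<exists>n::int. k = of_int (2*n)"
proof -
  from assms have "exp (\<i> * of_real pi * k) = 1" by (simp add: E_def)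
  then have "Re (\<i> * of_real pi * k) = 0 \<and> (\<exists>n::int. Im (\<i> * of_real pi * k) = of_int (2 * n) * pi)"
    by (simp only: exp_eq_1)
  then obtain n :: int where h1: "Re (\<i> * of_real pi * k) = 0" and h2: "Im (\<i> * of_real pi * k) = of_int (2 * n) * pi"
    by blast
  from h1 have "Im k = 0" by simp
  moreover from h2 have "Re k = of_int (2*n)" by simp
  ultimately have "k = of_int (2*n)" by (simp add: complex_eq_iff)
  then show ?thesis by blast
qed

lemma E_eqm1: assumes "E k = -1" shows "\<exists>m::int. k = of_int (2*m+1)"
proof -
  have "E (k - 1) = E k * inverse (E 1)"
    using E_add[of k "-1"] E_neg[of 1] by simp
  also have "\<dots> = 1" using assms E_one by simp
  finally obtain n :: int where "k - 1 = of_int (2*n)" using E_eq1 by blast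
  then have "k = of_int (2*n+1)" by (simp add: algebra_simps)
  then show ?thesis by blast
qed

lemma E_int: assumes "k \<in> \<int>" shows "E k = 1 \<or> E k = -1"
proof -
  from assms obtain n :: int where k: "k = of_int n" by (auto elim: Ints_cases)
  have "E k ^ 2 = E (k + k)" by (simp only: E_add power2_eq_square)
  also have "\<dots> = exp (\<i> * of_real pi * (of_int (2*n)))" by (simp add: E_def k)
  also have "\<dots> = 1"
    by (subst exp_eq_1) (auto intro!: exI[of _ n])
  finally show ?thesis by (simp add: power2_eq_1_iff)
qed

lemma E_odd: assumes "k = of_int (2*m+1)" shows "E k = -1"
proof -
  have "E (of_int (2*m)) = exp (\<i> * of_real pi * (of_int (2*m)))" by (simp add: E_def)
  also have "\<dots> = 1"
    by (subst exp_eq_1) (auto intro!: exI[of _ m])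
  finally have "E (of_int (2*m)) = 1" .
  then show ?thesis using E_add[of "of_int (2*m)" 1] E_one assms by simp
qed

lemma tv: fixes t v :: complex
  assumes "t \<noteq> 0" "v \<noteq> 0" "t + 1/t = v + 1/v" shows "t = v \<or> t * v = 1"
proof -
  have "(t - v) * (t * v - 1) = t * v * ((t + 1/t) - (v + 1/v))"
    using assms(1,2) by (simp add: field_simps)
  also have "\<dots> = 0" using assms(3) by simp
  finally show ?thesis by auto
qed



definition thA :: "complex \<Rightarrow> complex \<Rightarrow> complex \<Rightarrow> complex \<Rightarrow> nat \<Rightarrow> complex" where
  "thA a1 a2 a3 a4 = (\<lambda>i. if i = 1 then a1 * a4 + a2 * a3
                   else if i = 2 then a2 * a4 + a1 * a3
                   else if i = 3 then a3 * a4 + a1 * a2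
                   else if i = 4 then a1 * a2 * a3 * a4 + a1^2 + a2^2 + a3^2 + a4^2 - 4
                   else 0)"

definition isPhi :: "(nat \<Rightarrow> complex) \<Rightarrow> complex \<Rightarrow> complex \<Rightarrow> complex \<Rightarrow> bool" where
  "isPhi \<theta> x1 x2 x3 \<longleftrightarrow> \<theta> 1 = 2*x1 + x2*x3 \<and> \<theta> 2 = 2*x2 + x1*x3 \<and> \<theta> 3 = 2*x3 + x1*x2
      \<and> \<theta> 4 = x1^2 + x2^2 + x3^2 + 2*x1*x2*x3"

lemma resolv:
  fixes a1 a2 a3 a4 :: complex
  shows "a1*a2+a1*a3+a1*a4+a2*a3+a2*a4+a3*a4 = (a1*a4+a2*a3) + (a2*a4+a1*a3) + (a3*a4+a1*a2)"
    and "(a1+a2+a3+a4)*(a1*a2*a3+a1*a2*a4+a1*a3*a4+a2*a3*a4) - 4*(a1*a2*a3*a4)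
         = (a1*a4+a2*a3)*(a2*a4+a1*a3) + (a1*a4+a2*a3)*(a3*a4+a1*a2) + (a2*a4+a1*a3)*(a3*a4+a1*a2)"
    and "(a1+a2+a3+a4)^2*(a1*a2*a3*a4) + (a1*a2*a3+a1*a2*a4+a1*a3*a4+a2*a3*a4)^2
          - 4*(a1*a2+a1*a3+a1*a4+a2*a3+a2*a4+a3*a4)*(a1*a2*a3*a4)
         = (a1*a4+a2*a3)*(a2*a4+a1*a3)*(a3*a4+a1*a2)"
    and "a1*a2*a3*a4 + (a1+a2+a3+a4)^2 = (a1*a2*a3*a4 + a1^2 + a2^2 + a3^2 + a4^2 - 4)
          + 2*(a1*a2+a1*a3+a1*a4+a2*a3+a2*a4+a3*a4) + 4"
  by algebra+

lemma elim_cert: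
  fixes e1 e2 e3 e4 f1 :: complex
  shows "4*((16-8*e1+4*e2-2*e3+e4)*(16+8*e1+4*e2+2*e3+e4)*(e1^4-4*e1^2*e2-e1^2*e4+8*e1*e3+e3^2)^2) = (8*e1^8 + 2*e1^7*e3 + 4*e1^6*e2*f1 - 96*e1^6*e2 + e1^6*e4*f1 - 24*e1^6*e4 + 24*e1^6*f1^2 + 336*e1^6*f1 - 768*e1^6 - 24*e1^5*e2*e3 - 6*e1^5*e3*e4 + 6*e1^5*e3*f1^2 + 192*e1^5*e3*f1 + 384*e1^5*e3 - 160*e1^4*e2^2*f1 + 640*e1^4*e2^2 - 80*e1^4*e2*e4*f1 + 320*e1^4*e2*e4 + 12*e1^4*e2*f1^3 - 160*e1^4*e2*f1^2 - 448*e1^4*e2*f1 - 2048*e1^4*e2 + 28*e1^4*e3^2*f1 + 312*e1^4*e3^2 - 10*e1^4*e4^2*f1 + 40*e1^4*e4^2 + 3*e1^4*e4*f1^3 - 40*e1^4*e4*f1^2 - 112*e1^4*e4*f1 - 512*e1^4*e4 - 336*e1^4*f1^3 + 256*e1^4*f1^2 + 3840*e1^4*f1 - 2048*e1^4 - 96*e1^3*e2^2*e3 - 48*e1^3*e2*e3*e4 - 24*e1^3*e2*e3*f1^2 + 288*e1^3*e2*e3*f1 - 5120*e1^3*e2*e3 + 42*e1^3*e3^3 - 6*e1^3*e3*e4^2 - 6*e1^3*e3*e4*f1^2 + 72*e1^3*e3*e4*f1 - 1280*e1^3*e3*e4 - 192*e1^3*e3*f1^3 + 64*e1^3*e3*f1^2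 + 2688*e1^3*e3*f1 - 2560*e1^3*e3 + 64*e1^2*e2^3*f1 + 512*e1^2*e2^3 + 48*e1^2*e2^2*e4*f1 + 384*e1^2*e2^2*e4 + 48*e1^2*e2^2*f1^3 + 128*e1^2*e2^2*f1^2 - 1024*e1^2*e2^2*f1 + 6144*e1^2*e2^2 + 20*e1^2*e2*e3^2*f1 - 832*e1^2*e2*e3^2 + 12*e1^2*e2*e4^2*f1 + 96*e1^2*e2*e4^2 + 24*e1^2*e2*e4*f1^3 + 64*e1^2*e2*e4*f1^2 - 512*e1^2*e2*e4*f1 + 3072*e1^2*e2*e4 + 576*e1^2*e2*f1^3 - 11264*e1^2*e2*f1 + 24576*e1^2*e2 + 5*e1^2*e3^2*e4*f1 - 208*e1^2*e3^2*e4 - 24*e1^2*e3^2*f1^3 - 88*e1^2*e3^2*f1^2 + 80*e1^2*e3^2*f1 + 2816*e1^2*e3^2 + e1^2*e4^3*f1 + 8*e1^2*e4^3 + 3*e1^2*e4^2*f1^3 + 8*e1^2*e4^2*f1^2 - 64*e1^2*e4^2*f1 + 384*e1^2*e4^2 + 144*e1^2*e4*f1^3 - 2816*e1^2*e4*f1 + 6144*e1^2*e4 + 1536*e1^2*f1^3 - 2048*e1^2*f1^2 - 24576*e1^2*f1 + 32768*e1^2 + 128*e1*e2^3*e3 + 96*e1*e2^2*e3*e4 + 96*e1*e2^2*e3*f1^2 - 384*e1*e2^2*e3*f1 + 1536*e1*e2^2*e3 - 48*e1*e2*e3^3 + 24*e1*e2*e3*e4^2 + 48*e1*e2*e3*e4*f1^2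 - 192*e1*e2*e3*e4*f1 + 768*e1*e2*e3*e4 + 96*e1*e2*e3*f1^3 + 256*e1*e2*e3*f1^2 - 3072*e1*e2*e3*f1 + 6144*e1*e2*e3 - 12*e1*e3^3*e4 - 18*e1*e3^3*f1^2 - 96*e1*e3^3*f1 + 832*e1*e3^3 + 2*e1*e3*e4^3 + 6*e1*e3*e4^2*f1^2 - 24*e1*e3*e4^2*f1 + 96*e1*e3*e4^2 + 24*e1*e3*e4*f1^3 + 64*e1*e3*e4*f1^2 - 768*e1*e3*e4*f1 + 1536*e1*e3*e4 + 384*e1*e3*f1^3 - 512*e1*e3*f1^2 - 6144*e1*e3*f1 + 8192*e1*e3 + 16*e2^2*e3^2*f1 + 8*e2*e3^2*e4*f1 + 12*e2*e3^2*f1^3 - 64*e2*e3^2*f1^2 + 128*e2*e3^2*f1 - 12*e3^4*f1 + 64*e3^4 + e3^2*e4^2*f1 + 3*e3^2*e4*f1^3 - 16*e3^2*e4*f1^2 + 32*e3^2*e4*f1 + 48*e3^2*f1^3 - 256*e3^2*f1^2 + 256*e3^2*f1)*(e1^2*f1 - 8*e1^2 - 2*e1*e3 + 4*e2*f1 + e4*f1 - f1^3 + 16*f1) + (- 8*e1^6*f1 - 192*e1^6 - 2*e1^5*e3*f1 - 96*e1^5*e3 + 64*e1^4*e2^2 + 32*e1^4*e2*e4 - 4*e1^4*e2*f1^2 + 32*e1^4*e2*f1 + 256*e1^4*e2 - 12*e1^4*e3^2 + 4*e1^4*e4^2 - e1^4*e4*f1^2 + 8*e1^4*e4*f1 + 64*e1^4*e4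 + 112*e1^4*f1^2 + 512*e1^4*f1 + 1024*e1^4 + 8*e1^3*e2*e3*f1 - 128*e1^3*e2*e3 + 2*e1^3*e3*e4*f1 - 32*e1^3*e3*e4 + 64*e1^3*e3*f1^2 + 320*e1^3*e3*f1 + 512*e1^3*e3 - 16*e1^2*e2^2*f1^2 - 128*e1^2*e2^2*f1 - 16*e1^2*e2*e3^2 - 8*e1^2*e2*e4*f1^2 - 64*e1^2*e2*e4*f1 - 192*e1^2*e2*f1^2 - 1024*e1^2*e2*f1 - 4*e1^2*e3^2*e4 + 8*e1^2*e3^2*f1^2 + 72*e1^2*e3^2*f1 + 320*e1^2*e3^2 - e1^2*e4^2*f1^2 - 8*e1^2*e4^2*f1 - 48*e1^2*e4*f1^2 - 256*e1^2*e4*f1 - 512*e1^2*f1^2 - 2048*e1^2*f1 - 32*e1*e2^2*e3*f1 - 16*e1*e2*e3*e4*f1 - 32*e1*e2*e3*f1^2 - 256*e1*e2*e3*f1 + 6*e1*e3^3*f1 + 64*e1*e3^3 - 2*e1*e3*e4^2*f1 - 8*e1*e3*e4*f1^2 - 64*e1*e3*e4*f1 - 128*e1*e3*f1^2 - 512*e1*e3*f1 - 4*e2*e3^2*f1^2 + 4*e3^4 - e3^2*e4*f1^2 - 16*e3^2*f1^2)*(e1^4 - 8*e1^2*e2 - 2*e1^2*e4 + 2*e1^2*f1^2 - 16*e1^2*f1 + 32*e1^2 + 16*e2^2 + 8*e2*e4 + 8*e2*f1^2 - 64*e2*f1 + 128*e2 - 4*e3^2 + e4^2 + 2*e4*f1^2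 - 16*e4*f1 + 32*e4 - 3*f1^4 + 16*f1^3 + 32*f1^2 - 256*f1 + 256)"
  by algebra

lemma elim:
  fixes e1 e2 e3 e4 f1 f3 f4 :: complex
  assumes h4: "f4 = e4 + e1^2 - f1^2" and h3: "2*f3 = 16 - 8*f1 + 4*e2 + f4"
    and r2: "f1*f3 - 4*f4 = e1*e3 - 4*e4"
    and r3: "f1^2*f4 + f3^2 - 4*e2*f4 = e1^2*e4 + e3^2 - 4*e2*e4"
  shows "(16-8*e1+4*e2-2*e3+e4)*(16+8*e1+4*e2+2*e3+e4)*(e1^4-4*e1^2*e2-e1^2*e4+8*e1*e3+e3^2) = 0"
proof -
  have g1: "(e1^2*f1 - 8*e1^2 - 2*e1*e3 + 4*e2*f1 + e4*f1 - f1^3 + 16*f1) = 0" using h4 h3 r2 by algebra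
  have g2: "(e1^4 - 8*e1^2*e2 - 2*e1^2*e4 + 2*e1^2*f1^2 - 16*e1^2*f1 + 32*e1^2 + 16*e2^2 + 8*e2*e4 + 8*e2*f1^2 - 64*e2*f1 + 128*e2 - 4*e3^2 + e4^2 + 2*e4*f1^2 - 16*e4*f1 + 32*e4 - 3*f1^4 + 16*f1^3 + 32*f1^2 - 256*f1 + 256) = 0" using h4 h3 r3 by algebra
  have "4*((16-8*e1+4*e2-2*e3+e4)*(16+8*e1+4*e2+2*e3+e4)*(e1^4-4*e1^2*e2-e1^2*e4+8*e1*e3+e3^2)^2) = (8*e1^8 + 2*e1^7*e3 + 4*e1^6*e2*f1 - 96*e1^6*e2 + e1^6*e4*f1 - 24*e1^6*e4 + 24*e1^6*f1^2 + 336*e1^6*f1 - 768*e1^6 - 24*e1^5*e2*e3 - 6*e1^5*e3*e4 + 6*e1^5*e3*f1^2 + 192*e1^5*e3*f1 + 384*e1^5*e3 - 160*e1^4*e2^2*f1 + 640*e1^4*e2^2 - 80*e1^4*e2*e4*f1 + 320*e1^4*e2*e4 + 12*e1^4*e2*f1^3 - 160*e1^4*e2*f1^2 - 448*e1^4*e2*f1 - 2048*e1^4*e2 + 28*e1^4*e3^2*f1 + 312*e1^4*e3^2 - 10*e1^4*e4^2*f1 + 40*e1^4*e4^2 + 3*e1^4*e4*f1^3 - 40*e1^4*e4*f1^2 - 112*e1^4*e4*f1 - 512*e1^4*e4 - 336*e1^4*f1^3 + 256*e1^4*f1^2 + 3840*e1^4*f1 - 2048*e1^4 - 96*e1^3*e2^2*e3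 - 48*e1^3*e2*e3*e4 - 24*e1^3*e2*e3*f1^2 + 288*e1^3*e2*e3*f1 - 5120*e1^3*e2*e3 + 42*e1^3*e3^3 - 6*e1^3*e3*e4^2 - 6*e1^3*e3*e4*f1^2 + 72*e1^3*e3*e4*f1 - 1280*e1^3*e3*e4 - 192*e1^3*e3*f1^3 + 64*e1^3*e3*f1^2 + 2688*e1^3*e3*f1 - 2560*e1^3*e3 + 64*e1^2*e2^3*f1 + 512*e1^2*e2^3 + 48*e1^2*e2^2*e4*f1 + 384*e1^2*e2^2*e4 + 48*e1^2*e2^2*f1^3 + 128*e1^2*e2^2*f1^2 - 1024*e1^2*e2^2*f1 + 6144*e1^2*e2^2 + 20*e1^2*e2*e3^2*f1 - 832*e1^2*e2*e3^2 + 12*e1^2*e2*e4^2*f1 + 96*e1^2*e2*e4^2 + 24*e1^2*e2*e4*f1^3 + 64*e1^2*e2*e4*f1^2 - 512*e1^2*e2*e4*f1 + 3072*e1^2*e2*e4 + 576*e1^2*e2*f1^3 - 11264*e1^2*e2*f1 + 24576*e1^2*e2 + 5*e1^2*e3^2*e4*f1 - 208*e1^2*e3^2*e4 - 24*e1^2*e3^2*f1^3 - 88*e1^2*e3^2*f1^2 + 80*e1^2*e3^2*f1 + 2816*e1^2*e3^2 + e1^2*e4^3*f1 + 8*e1^2*e4^3 + 3*e1^2*e4^2*f1^3 + 8*e1^2*e4^2*f1^2 - 64*e1^2*e4^2*f1 + 384*e1^2*e4^2 + 144*e1^2*e4*f1^3 - 2816*e1^2*e4*f1 + 6144*e1^2*e4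 + 1536*e1^2*f1^3 - 2048*e1^2*f1^2 - 24576*e1^2*f1 + 32768*e1^2 + 128*e1*e2^3*e3 + 96*e1*e2^2*e3*e4 + 96*e1*e2^2*e3*f1^2 - 384*e1*e2^2*e3*f1 + 1536*e1*e2^2*e3 - 48*e1*e2*e3^3 + 24*e1*e2*e3*e4^2 + 48*e1*e2*e3*e4*f1^2 - 192*e1*e2*e3*e4*f1 + 768*e1*e2*e3*e4 + 96*e1*e2*e3*f1^3 + 256*e1*e2*e3*f1^2 - 3072*e1*e2*e3*f1 + 6144*e1*e2*e3 - 12*e1*e3^3*e4 - 18*e1*e3^3*f1^2 - 96*e1*e3^3*f1 + 832*e1*e3^3 + 2*e1*e3*e4^3 + 6*e1*e3*e4^2*f1^2 - 24*e1*e3*e4^2*f1 + 96*e1*e3*e4^2 + 24*e1*e3*e4*f1^3 + 64*e1*e3*e4*f1^2 - 768*e1*e3*e4*f1 + 1536*e1*e3*e4 + 384*e1*e3*f1^3 - 512*e1*e3*f1^2 - 6144*e1*e3*f1 + 8192*e1*e3 + 16*e2^2*e3^2*f1 + 8*e2*e3^2*e4*f1 + 12*e2*e3^2*f1^3 - 64*e2*e3^2*f1^2 + 128*e2*e3^2*f1 - 12*e3^4*f1 + 64*e3^4 + e3^2*e4^2*f1 + 3*e3^2*e4*f1^3 - 16*e3^2*e4*f1^2 + 32*e3^2*e4*f1 + 48*e3^2*f1^3 - 256*e3^2*f1^2 + 256*e3^2*f1)*(e1^2*f1 - 8*e1^2 - 2*e1*e3 + 4*e2*f1 + e4*f1 -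 f1^3 + 16*f1) + (- 8*e1^6*f1 - 192*e1^6 - 2*e1^5*e3*f1 - 96*e1^5*e3 + 64*e1^4*e2^2 + 32*e1^4*e2*e4 - 4*e1^4*e2*f1^2 + 32*e1^4*e2*f1 + 256*e1^4*e2 - 12*e1^4*e3^2 + 4*e1^4*e4^2 - e1^4*e4*f1^2 + 8*e1^4*e4*f1 + 64*e1^4*e4 + 112*e1^4*f1^2 + 512*e1^4*f1 + 1024*e1^4 + 8*e1^3*e2*e3*f1 - 128*e1^3*e2*e3 + 2*e1^3*e3*e4*f1 - 32*e1^3*e3*e4 + 64*e1^3*e3*f1^2 + 320*e1^3*e3*f1 + 512*e1^3*e3 - 16*e1^2*e2^2*f1^2 - 128*e1^2*e2^2*f1 - 16*e1^2*e2*e3^2 - 8*e1^2*e2*e4*f1^2 - 64*e1^2*e2*e4*f1 - 192*e1^2*e2*f1^2 - 1024*e1^2*e2*f1 - 4*e1^2*e3^2*e4 + 8*e1^2*e3^2*f1^2 + 72*e1^2*e3^2*f1 + 320*e1^2*e3^2 - e1^2*e4^2*f1^2 - 8*e1^2*e4^2*f1 - 48*e1^2*e4*f1^2 - 256*e1^2*e4*f1 - 512*e1^2*f1^2 - 2048*e1^2*f1 - 32*e1*e2^2*e3*f1 - 16*e1*e2*e3*e4*f1 - 32*e1*e2*e3*f1^2 - 256*e1*e2*e3*f1 + 6*e1*e3^3*f1 + 64*e1*e3^3 - 2*e1*e3*e4^2*f1 - 8*e1*e3*e4*f1^2 - 64*e1*e3*e4*f1 - 128*e1*e3*f1^2 -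 512*e1*e3*f1 - 4*e2*e3^2*f1^2 + 4*e3^4 - e3^2*e4*f1^2 - 16*e3^2*f1^2)*(e1^4 - 8*e1^2*e2 - 2*e1^2*e4 + 2*e1^2*f1^2 - 16*e1^2*f1 + 32*e1^2 + 16*e2^2 + 8*e2*e4 + 8*e2*f1^2 - 64*e2*f1 + 128*e2 - 4*e3^2 + e4^2 + 2*e4*f1^2 - 16*e4*f1 + 32*e4 - 3*f1^4 + 16*f1^3 + 32*f1^2 - 256*f1 + 256)" by (rule elim_cert)
  also have "\<dots> = 0" by (simp only: g1 g2 mult_zero_right add_0)
  finally show ?thesis by (metis mult_eq_0_iff power_eq_0_iff zero_neq_numeral)
qed

lemma sing_to_prod:
  fixes a1 a2 a3 a4 x1 x2 x3 :: complex
  assumes "isPhi (thA a1 a2 a3 a4) x1 x2 x3"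
  shows "(2-a1)*(2-a2)*(2-a3)*(2-a4) = 0 \<or> (2+a1)*(2+a2)*(2+a3)*(2+a4) = 0 \<or>
     (a1+a2+a3+a4)^4 - 4*(a1+a2+a3+a4)^2*(a1*a2+a1*a3+a1*a4+a2*a3+a2*a4+a3*a4)
     - (a1+a2+a3+a4)^2*(a1*a2*a3*a4) + 8*(a1+a2+a3+a4)*(a1*a2*a3+a1*a2*a4+a1*a3*a4+a2*a3*a4)
     + (a1*a2*a3+a1*a2*a4+a1*a3*a4+a2*a3*a4)^2 = 0"
proof -
  define e1 where "e1 = a1+a2+a3+a4"
  define e2 where "e2 = a1*a2+a1*a3+a1*a4+a2*a3+a2*a4+a3*a4"
  define e3 where "e3 = a1*a2*a3+a1*a2*a4+a1*a3*a4+a2*a3*a4"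
  define e4 where "e4 = a1*a2*a3*a4"
  define f1 where "f1 = x1+x2+x3+2"
  define f2 where "f2 = x1*x2+x1*x3+x1*2+x2*x3+x2*2+x3*2"
  define f3 where "f3 = x1*x2*x3+x1*x2*2+x1*x3*2+x2*x3*2"
  define f4 where "f4 = x1*x2*x3*2"
  from assms have T1: "a1*a4+a2*a3 = x1*2+x2*x3" and T2: "a2*a4+a1*a3 = x2*2+x1*x3"
    and T3: "a3*a4+a1*a2 = x3*2+x1*x2"
    and T4: "a1*a2*a3*a4 + a1^2 + a2^2 + a3^2 + a4^2 - 4 = x1*x2*x3*2 + x1^2 + x2^2 + x3^2 + 2^2 - 4"
    by (auto simp: isPhi_def thA_def algebra_simps power2_eq_square)
  note defs = e1_def e2_def e3_def e4_def f1_def f2_def f3_def f4_def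
  note Ra = resolv[of a1 a2 a3 a4]
  note Rx = resolv[of x1 x2 x3 2]
  have r1: "f2 = e2" unfolding defs using Ra(1) Rx(1) T1 T2 T3 by algebra
  have r4: "f4 = e4 + e1^2 - f1^2" unfolding defs using Ra(4) Rx(4) T1 T2 T3 T4 by algebra
  have root: "16 - 8*f1 + 4*f2 - 2*f3 + f4 = 0" unfolding f1_def f2_def f3_def f4_def by algebra
  have h3: "2*f3 = 16 - 8*f1 + 4*e2 + f4" using root r1 by (simp add: algebra_simps)
  have r2: "f1*f3 - 4*f4 = e1*e3 - 4*e4" unfolding defs using Ra(2) Rx(2) T1 T2 T3 by algebra
  have r3: "f1^2*f4 + f3^2 - 4*e2*f4 = e1^2*e4 + e3^2 - 4*e2*e4"
    using r1 Ra(3) Rx(3) T1 T2 T3 unfolding defs by algebra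
  have Z0: "(16-8*e1+4*e2-2*e3+e4)*(16+8*e1+4*e2+2*e3+e4)*(e1^4-4*e1^2*e2-e1^2*e4+8*e1*e3+e3^2) = 0"
    by (rule elim[OF r4 h3 r2 r3])
  have P2e: "16-8*e1+4*e2-2*e3+e4 = (2-a1)*(2-a2)*(2-a3)*(2-a4)"
    unfolding e1_def e2_def e3_def e4_def by algebra
  have Pm2e: "16+8*e1+4*e2+2*e3+e4 = (2+a1)*(2+a2)*(2+a3)*(2+a4)"
    unfolding e1_def e2_def e3_def e4_def by algebra
  have Z: "((2-a1)*(2-a2)*(2-a3)*(2-a4))*((2+a1)*(2+a2)*(2+a3)*(2+a4))*(e1^4-4*e1^2*e2-e1^2*e4+8*e1*e3+e3^2) = 0"
    using Z0 unfolding P2e Pm2e .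
  show ?thesis using Z unfolding e1_def e2_def e3_def e4_def by (simp only: mult_eq_0_iff) blast
qed



lemma Yfact:
  fixes a1 a2 a3 a4 p q :: complex
  assumes "p + q = a3*a4" "p*q = a3^2+a4^2-4"
  shows "(a1+a2+a3+a4)^4 - 4*(a1+a2+a3+a4)^2*(a1*a2+a1*a3+a1*a4+a2*a3+a2*a4+a3*a4)
     - (a1+a2+a3+a4)^2*(a1*a2*a3*a4) + 8*(a1+a2+a3+a4)*(a1*a2*a3+a1*a2*a4+a1*a3*a4+a2*a3*a4)
     + (a1*a2*a3+a1*a2*a4+a1*a3*a4+a2*a3*a4)^2
   = (p^2 - a1*a2*p + a1^2 + a2^2 - 4)*(q^2 - a1*a2*q + a1^2 + a2^2 - 4)"
  using assms by algebra

lemma Fz: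
  fixes a1 t2 w :: complex
  assumes "t2 \<noteq> 0" "w \<noteq> 0"
  shows "(w+1/w)^2 - a1*(t2+1/t2)*(w+1/w) + a1^2 + (t2+1/t2)^2 - 4
     = (a1 - (t2*w + 1/(t2*w)))*(a1 - (t2/w + 1/(t2/w)))"
  using assms by (simp add: field_simps power2_eq_square)

lemma pq:
  fixes t3 t4 :: complex
  assumes "t3 \<noteq> 0" "t4 \<noteq> 0"
  shows "(t3*t4 + 1/(t3*t4)) + (t3/t4 + 1/(t3/t4)) = (t3+1/t3)*(t4+1/t4)"
    and "(t3*t4 + 1/(t3*t4)) * (t3/t4 + 1/(t3/t4)) = (t3+1/t3)^2 + (t4+1/t4)^2 - 4"
  using assms by (simp_all add: field_simps power2_eq_square)

lemma pt1: "\<epsilon> = 1 \<or> \<epsilon> = -1 \<Longrightarrow> isPhi (thA (2*\<epsilon>) a2 a3 a4) (\<epsilon>*a4) (\<epsilon>*a3) (\<epsilon>*a2)"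
  by (auto simp: isPhi_def thA_def algebra_simps power2_eq_square)
lemma pt2: "\<epsilon> = 1 \<or> \<epsilon> = -1 \<Longrightarrow> isPhi (thA a1 (2*\<epsilon>) a3 a4) (\<epsilon>*a3) (\<epsilon>*a4) (\<epsilon>*a1)"
  by (auto simp: isPhi_def thA_def algebra_simps power2_eq_square)
lemma pt3: "\<epsilon> = 1 \<or> \<epsilon> = -1 \<Longrightarrow> isPhi (thA a1 a2 (2*\<epsilon>) a4) (\<epsilon>*a2) (\<epsilon>*a1) (\<epsilon>*a4)"
  by (auto simp: isPhi_def thA_def algebra_simps power2_eq_square)
lemma pt4: "\<epsilon> = 1 \<or> \<epsilon> = -1 \<Longrightarrow> isPhi (thA a1 a2 a3 (2*\<epsilon>)) (\<epsilon>*a1) (\<epsilon>*a2) (\<epsilon>*a3)"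
  by (auto simp: isPhi_def thA_def algebra_simps power2_eq_square)

lemma pt_prod:
  fixes u1 u2 u3 u4 :: complex
  assumes nz: "u2 \<noteq> 0" "u3 \<noteq> 0" "u4 \<noteq> 0" and pr: "u1*u2*u3*u4 = 1"
  shows "isPhi (thA (u1+1/u1) (u2+1/u2) (u3+1/u3) (u4+1/u4)) (u1*u4+u2*u3) (u2*u4+u1*u3) (u3*u4+u1*u2)"
proof -
  have u1: "u1 = 1/(u2*u3*u4)" using pr nz by (simp add: field_simps)
  show ?thesis unfolding u1 using nz
    by (simp add: isPhi_def thA_def field_simps power2_eq_square) algebra?
qed

lemma sing_iff: "sing_point \<theta> (X0,X1,X2,X3) \<longleftrightarrow> (X0,X1,X2,X3) \<noteq> 0 \<and> cubicF \<theta> X0 X1 X2 X3 = 0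
   \<and> X1^2+X2^2+X3^2 - 2*X0*(\<theta> 1*X1+\<theta> 2*X2+\<theta> 3*X3) + 3*\<theta> 4*X0^2 = 0
   \<and> X2*X3 + 2*X0*X1 - X0^2*\<theta> 1 = 0 \<and> X1*X3 + 2*X0*X2 - X0^2*\<theta> 2 = 0
   \<and> X1*X2 + 2*X0*X3 - X0^2*\<theta> 3 = 0"
  by (simp add: sing_point_def d0 d1 d2 d3)

lemma sing_X0: assumes "sing_point \<theta> (X0,X1,X2,X3)" shows "X0 \<noteq> 0"
proof
  assume z: "X0 = 0"
  from assms have nz: "(X0,X1,X2,X3) \<noteq> 0"
    and e0: "X1^2+X2^2+X3^2 - 2*X0*(\<theta> 1*X1+\<theta> 2*X2+\<theta> 3*X3) + 3*\<theta> 4*X0^2 = 0"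
    and e1: "X2*X3 + 2*X0*X1 - X0^2*\<theta> 1 = 0" and e2: "X1*X3 + 2*X0*X2 - X0^2*\<theta> 2 = 0"
    and e3: "X1*X2 + 2*X0*X3 - X0^2*\<theta> 3 = 0"
    by (simp_all add: sing_iff)
  have "X1^3 = 0" using z e0 e1 e2 e3 by algebra
  moreover have "X2^3 = 0" using z e0 e1 e2 e3 by algebra
  moreover have "X3^3 = 0" using z e0 e1 e2 e3 by algebra
  ultimately show False using nz z by (simp add: zero_prod_def)
qed

lemma sing_Phi: assumes "sing_point \<theta> (X0,X1,X2,X3)" shows "isPhi \<theta> (X1/X0) (X2/X0) (X3/X0)"
proof -
  have X0: "X0 \<noteq> 0" by (rule sing_X0[OF assms])
  from assms have c: "cubicF \<theta> X0 X1 X2 X3 = 0"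
    and e1: "X2*X3 + 2*X0*X1 - X0^2*\<theta> 1 = 0" and e2: "X1*X3 + 2*X0*X2 - X0^2*\<theta> 2 = 0"
    and e3: "X1*X2 + 2*X0*X3 - X0^2*\<theta> 3 = 0"
    by (simp_all add: sing_iff)
  have t4: "X0^3 * \<theta> 4 = 2*X1*X2*X3 + X0*(X1^2+X2^2+X3^2)"
    using c e1 e2 e3 unfolding cubicF_def by algebra
  have q1: "\<theta> 1 = 2*(X1/X0) + (X2/X0)*(X3/X0)" using e1 X0
    by (simp add: field_simps power2_eq_square)
  have q2: "\<theta> 2 = 2*(X2/X0) + (X1/X0)*(X3/X0)" using e2 X0
    by (simp add: field_simps power2_eq_square)
  have q3: "\<theta> 3 = 2*(X3/X0) + (X1/X0)*(X2/X0)" using e3 X0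
    by (simp add: field_simps power2_eq_square)
  have q4: "\<theta> 4 = (X1/X0)^2 + (X2/X0)^2 + (X3/X0)^2 + 2*(X1/X0)*(X2/X0)*(X3/X0)"
  proof -
    have "\<theta> 4 = (X0^3 * \<theta> 4) / X0^3" using X0 by simp
    also have "\<dots> = (2*X1*X2*X3 + X0*(X1^2+X2^2+X3^2)) / X0^3" by (simp only: t4)
    also have "\<dots> = (X1/X0)^2 + (X2/X0)^2 + (X3/X0)^2 + 2*(X1/X0)*(X2/X0)*(X3/X0)"
      using X0 by (simp add: field_simps power2_eq_square power3_eq_cube)
    finally show ?thesis .
  qed
  show ?thesis unfolding isPhi_def using q1 q2 q3 q4 by blast
qed

lemma Phi_sing: assumes "isPhi \<theta> x1 x2 x3" shows "sing_point \<theta> (1,x1,x2,x3)"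
proof -
  from assms have h1: "\<theta> 1 = 2*x1 + x2*x3" and h2: "\<theta> 2 = 2*x2 + x1*x3" and h3: "\<theta> 3 = 2*x3 + x1*x2"
    and h4: "\<theta> 4 = x1^2 + x2^2 + x3^2 + 2*x1*x2*x3" by (simp_all add: isPhi_def)
  have "(1::complex,x1,x2,x3) \<noteq> 0" by (simp add: zero_prod_def)
  moreover have "cubicF \<theta> 1 x1 x2 x3 = 0" unfolding cubicF_def h1 h2 h3 h4
    by (simp only: power_one mult_1 mult_1_right) algebra
  moreover have "x1^2+x2^2+x3^2 - 2*1*(\<theta> 1*x1+\<theta> 2*x2+\<theta> 3*x3) + 3*\<theta> 4*1^2 = 0"
    unfolding h1 h2 h3 h4 by (simp only: power_one mult_1 mult_1_right) algebra
  moreover have "x2*x3 + 2*1*x1 - 1^2*\<theta> 1 = 0" unfolding h1 by (simp only: power_one mult_1 mult_1_right) algebra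
  moreover have "x1*x3 + 2*1*x2 - 1^2*\<theta> 2 = 0" unfolding h2 by (simp only: power_one mult_1 mult_1_right) algebra
  moreover have "x1*x2 + 2*1*x3 - 1^2*\<theta> 3 = 0" unfolding h3 by (simp only: power_one mult_1 mult_1_right) algebra
  ultimately show ?thesis unfolding sing_iff by blast
qed

lemma smooth_iff: "smooth_everywhere \<theta> \<longleftrightarrow> \<not> (\<exists>x1 x2 x3. isPhi \<theta> x1 x2 x3)"
proof
  assume s: "smooth_everywhere \<theta>"
  show "\<not> (\<exists>x1 x2 x3. isPhi \<theta> x1 x2 x3)"
  proof
    assume "\<exists>x1 x2 x3. isPhi \<theta> x1 x2 x3"
    then obtain x1 x2 x3 where "isPhi \<theta> x1 x2 x3" by blast
    then have "sing_point \<theta> (1,x1,x2,x3)" by (rule Phi_sing)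
    then show False using s by (simp add: smooth_everywhere_def)
  qed
next
  assume n: "\<not> (\<exists>x1 x2 x3. isPhi \<theta> x1 x2 x3)"
  show "smooth_everywhere \<theta>"
    unfolding smooth_everywhere_def
  proof
    fix X :: pt4
    obtain X0 X1 X2 X3 where X: "X = (X0,X1,X2,X3)" by (cases X) auto
    show "\<not> sing_point \<theta> X"
    proof
      assume "sing_point \<theta> X"
      then have "isPhi \<theta> (X1/X0) (X2/X0) (X3/X0)" unfolding X by (rule sing_Phi)
      then show False using n by blast
    qed
  qed
qed

lemma part1: "smooth_near_L \<theta>"
proof -
  define S :: "pt4 set" where "S = {X. cubicF \<theta> (fst X) (fst (snd X)) (fst (snd (snd X))) (snd (snd (snd X))) = 0
     \<and> (fst (snd X))^2+(fst (snd (snd X)))^2+(snd (snd (snd X)))^2 - 2*(fst X)*(\<theta> 1*(fst (snd X))+\<theta> 2*(fst (snd (snd X)))+\<theta> 3*(snd (snd (snd X)))) + 3*\<theta> 4*(fst X)^2 = 0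
     \<and> (fst (snd (snd X)))*(snd (snd (snd X))) + 2*(fst X)*(fst (snd X)) - (fst X)^2*\<theta> 1 = 0
     \<and> (fst (snd X))*(snd (snd (snd X))) + 2*(fst X)*(fst (snd (snd X))) - (fst X)^2*\<theta> 2 = 0
     \<and> (fst (snd X))*(fst (snd (snd X))) + 2*(fst X)*(snd (snd (snd X))) - (fst X)^2*\<theta> 3 = 0}"
  have cS: "closed S" unfolding S_def cubicF_def
    by (intro closed_Collect_conj closed_Collect_eq continuous_intros)
  have sub: "\<And>X. sing_point \<theta> X \<Longrightarrow> X \<in> S"
  proof -
    fix X :: pt4 assume a: "sing_point \<theta> X"
    obtain X0 X1 X2 X3 where X: "X = (X0,X1,X2,X3)" by (cases X) auto
    show "X \<in> S" using a unfolding X S_def by (simp add: sing_iff)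
  qed
  have Z: "\<And>X. X \<in> S \<Longrightarrow> X \<noteq> 0 \<Longrightarrow> sing_point \<theta> X"
  proof -
    fix X :: pt4 assume a: "X \<in> S" "X \<noteq> 0"
    obtain X0 X1 X2 X3 where X: "X = (X0,X1,X2,X3)" by (cases X) auto
    show "sing_point \<theta> X" using a unfolding X S_def by (simp add: sing_iff)
  qed
  show ?thesis unfolding smooth_near_L_def
  proof (intro exI[of _ "- S"] conjI)
    show "open (- S)" using cS by (simp add: open_Compl)
    show "coneL \<subseteq> - S"
    proof
      fix X assume X: "X \<in> coneL"
      obtain X0 X1 X2 X3 where XX: "X = (X0,X1,X2,X3)" by (cases X) auto
      from X have "X \<noteq> 0" "X0 = 0" unfolding coneL_def XX by auto
      show "X \<in> - S"
      proof
        assume "X \<in> S"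
        then have "sing_point \<theta> X" using Z \<open>X \<noteq> 0\<close> by blast
        then have "X0 \<noteq> 0" unfolding XX by (rule sing_X0)
        then show False using \<open>X0 = 0\<close> by simp
      qed
    qed
    show "\<forall>X\<in>- S. \<not> sing_point \<theta> X" using sub by blast
  qed
qed

lemma rh_E: "rh \<kappa> = thA (E (\<kappa> 1) + 1/E (\<kappa> 1)) (E (\<kappa> 2) + 1/E (\<kappa> 2)) (E (\<kappa> 3) + 1/E (\<kappa> 3))
    (- E (\<kappa> 4) + 1/(- E (\<kappa> 4)))"
proof -
  have c4: "- 2 * cos (of_real pi * \<kappa> 4) = - E (\<kappa> 4) + 1/(- E (\<kappa> 4))"
    using cos2[of "\<kappa> 4"] by (simp add: algebra_simps)
  show ?thesis unfolding rh_def Let_def thA_def cos2 c4 ..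
qed

lemma Ints_E: "E k = 1 \<or> E k = -1 \<Longrightarrow> k \<in> \<int>"
  using E_eq1[of k] E_eqm1[of k] by (auto simp del: of_int_add of_int_mult)

lemma t_two: fixes t :: complex assumes "t \<noteq> 0" "t + 1/t = 2" shows "t = 1"
proof -
  have "(t - 1)^2 = t * (t + 1/t - 2)" using assms(1) by (simp add: field_simps power2_eq_square)
  then show ?thesis using assms(2) by simp
qed

lemma t_mtwo: fixes t :: complex assumes "t \<noteq> 0" "t + 1/t = -2" shows "t = -1"
proof -
  have "(t + 1)^2 = t * (t + 1/t + 2)" using assms(1) by (simp add: field_simps power2_eq_square)
  then show ?thesis using assms(2) by (simp add: add_eq_0_iff2)
qed

lemma Wall_int: "i \<in> {1,2,3,4} \<Longrightarrow> \<kappa> i \<in> \<int> \<Longrightarrow> \<kappa> \<in> Wall"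
  unfolding Wall_def by blast

lemma Ewall:
  assumes "s2 \<in> {1,-1::complex}" "s3 \<in> {1,-1::complex}" "s4 \<in> {1,-1::complex}"
    and "E (\<kappa> 1) * E (s2 * \<kappa> 2) * E (s3 * \<kappa> 3) * E (s4 * \<kappa> 4) = -1"
  shows "\<kappa> \<in> Wall"
proof -
  have "E (\<kappa> 1 + s2 * \<kappa> 2 + s3 * \<kappa> 3 + s4 * \<kappa> 4) = -1" using assms(4) by (simp add: E_add)
  then obtain m :: int where "\<kappa> 1 + s2 * \<kappa> 2 + s3 * \<kappa> 3 + s4 * \<kappa> 4 = of_int (2*m+1)"
    using E_eqm1 by blast
  then show ?thesis unfolding Wall_def using assms(1-3) by blast
qed

lemma Em: "E ((-1) * k) = 1 / E k" by (simp add: E_neg inverse_eq_divide)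

lemma fwd: assumes "isPhi (rh \<kappa>) x1 x2 x3" shows "\<kappa> \<in> Wall"
proof -
  define t1 where "t1 = E (\<kappa> 1)"
  define t2 where "t2 = E (\<kappa> 2)"
  define t3 where "t3 = E (\<kappa> 3)"
  define t4 where "t4 = - E (\<kappa> 4)"
  have nz: "t1 \<noteq> 0" "t2 \<noteq> 0" "t3 \<noteq> 0" "t4 \<noteq> 0" by (simp_all add: t1_def t2_def t3_def t4_def E_nz)
  have P: "isPhi (thA (t1+1/t1) (t2+1/t2) (t3+1/t3) (t4+1/t4)) x1 x2 x3"
    using assms unfolding rh_E t1_def t2_def t3_def t4_def .
  note cases = sing_to_prod[OF P]
  have ii: "\<And>t. t \<noteq> 0 \<Longrightarrow> t = 1 \<or> t = -1 \<Longrightarrow> t \<in> {t1,t2,t3,t4} \<Longrightarrow> \<kappa> \<in> Wall"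
  proof -
    fix t assume "t \<noteq> 0" "t = 1 \<or> t = -1" "t \<in> {t1,t2,t3,t4}"
    then consider "t = t1" | "t = t2" | "t = t3" | "t = t4" by blast
    then show "\<kappa> \<in> Wall"
    proof cases
      case 1 then have "\<kappa> 1 \<in> \<int>" using Ints_E[of "\<kappa> 1"] \<open>t = 1 \<or> t = -1\<close> t1_def by auto
      then show ?thesis by (intro Wall_int[of 1]) auto
    next
      case 2 then have "\<kappa> 2 \<in> \<int>" using Ints_E[of "\<kappa> 2"] \<open>t = 1 \<or> t = -1\<close> t2_def by auto
      then show ?thesis by (intro Wall_int[of 2]) auto
    next
      case 3 then have "\<kappa> 3 \<in> \<int>" using Ints_E[of "\<kappa> 3"] \<open>t = 1 \<or> t = -1\<close> t3_def by auto
      then show ?thesis by (intro Wall_int[of 3]) auto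
    next
      case 4 then have "E (\<kappa> 4) = - t" using t4_def by simp
      then have "E (\<kappa> 4) = 1 \<or> E (\<kappa> 4) = -1" using \<open>t = 1 \<or> t = -1\<close> by auto
      then have "\<kappa> 4 \<in> \<int>" using Ints_E by blast
      then show ?thesis by (intro Wall_int[of 4]) auto
    qed
  qed
  consider (A) "(2-(t1+1/t1))*(2-(t2+1/t2))*(2-(t3+1/t3))*(2-(t4+1/t4)) = 0"
    | (B) "(2+(t1+1/t1))*(2+(t2+1/t2))*(2+(t3+1/t3))*(2+(t4+1/t4)) = 0"
    | (C) "((t1+1/t1)+(t2+1/t2)+(t3+1/t3)+(t4+1/t4))^4 - 4*((t1+1/t1)+(t2+1/t2)+(t3+1/t3)+(t4+1/t4))^2*((t1+1/t1)*(t2+1/t2)+(t1+1/t1)*(t3+1/t3)+(t1+1/t1)*(t4+1/t4)+(t2+1/t2)*(t3+1/t3)+(t2+1/t2)*(t4+1/t4)+(t3+1/t3)*(t4+1/t4))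
     - ((t1+1/t1)+(t2+1/t2)+(t3+1/t3)+(t4+1/t4))^2*((t1+1/t1)*(t2+1/t2)*(t3+1/t3)*(t4+1/t4)) + 8*((t1+1/t1)+(t2+1/t2)+(t3+1/t3)+(t4+1/t4))*((t1+1/t1)*(t2+1/t2)*(t3+1/t3)+(t1+1/t1)*(t2+1/t2)*(t4+1/t4)+(t1+1/t1)*(t3+1/t3)*(t4+1/t4)+(t2+1/t2)*(t3+1/t3)*(t4+1/t4))
     + ((t1+1/t1)*(t2+1/t2)*(t3+1/t3)+(t1+1/t1)*(t2+1/t2)*(t4+1/t4)+(t1+1/t1)*(t3+1/t3)*(t4+1/t4)+(t2+1/t2)*(t3+1/t3)*(t4+1/t4))^2 = 0"
    using cases by blast
  then show ?thesis
  proof cases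
    case A
    then obtain t where t0: "t \<in> {t1,t2,t3,t4}" "2 - (t + 1/t) = 0" by (simp only: mult_eq_0_iff) blast
    then have "t \<in> {t1,t2,t3,t4}" "t + 1/t = 2" by (metis right_minus_eq)+
    moreover have "t \<noteq> 0" using calculation(1) nz by auto
    ultimately show ?thesis using ii t_two by blast
  next
    case B
    then obtain t where t0: "t \<in> {t1,t2,t3,t4}" "2 + (t + 1/t) = 0" by (simp only: mult_eq_0_iff) blast
    then have "t \<in> {t1,t2,t3,t4}" "t + 1/t = -2" by (metis add_eq_0_iff)+
    moreover have "t \<noteq> 0" using calculation(1) nz by auto
    ultimately show ?thesis using ii t_mtwo by blast
  next
    case C
    define p where "p = t3*t4 + 1/(t3*t4)"
    define q where "q = t3/t4 + 1/(t3/t4)"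
    note pqs = pq[OF nz(3) nz(4), folded p_def q_def]
    have "(p^2 - (t1+1/t1)*(t2+1/t2)*p + (t1+1/t1)^2 + (t2+1/t2)^2 - 4)
         *(q^2 - (t1+1/t1)*(t2+1/t2)*q + (t1+1/t1)^2 + (t2+1/t2)^2 - 4) = 0"
      using C Yfact[OF pqs(1) pqs(2), of "t1+1/t1" "t2+1/t2"] by simp
    then have Fpq: "(p^2 - (t1+1/t1)*(t2+1/t2)*p + (t1+1/t1)^2 + (t2+1/t2)^2 - 4) = 0 \<or>
         (q^2 - (t1+1/t1)*(t2+1/t2)*q + (t1+1/t1)^2 + (t2+1/t2)^2 - 4) = 0" by (simp only: mult_eq_0_iff)
    have Ep: "p^2 - (t1+1/t1)*(t2+1/t2)*p + (t1+1/t1)^2 + (t2+1/t2)^2 - 4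
       = ((t1+1/t1) - (t2*(t3*t4) + 1/(t2*(t3*t4))))*((t1+1/t1) - (t2/(t3*t4) + 1/(t2/(t3*t4))))"
      unfolding p_def using Fz[of t2 "t3*t4" "t1+1/t1"] nz by simp
    have Eq: "q^2 - (t1+1/t1)*(t2+1/t2)*q + (t1+1/t1)^2 + (t2+1/t2)^2 - 4
       = ((t1+1/t1) - (t2*(t3/t4) + 1/(t2*(t3/t4))))*((t1+1/t1) - (t2/(t3/t4) + 1/(t2/(t3/t4))))"
      unfolding q_def using Fz[of t2 "t3/t4" "t1+1/t1"] nz by simp
    have "(t1+1/t1) = (t2*(t3*t4) + 1/(t2*(t3*t4))) \<or> (t1+1/t1) = (t2/(t3*t4) + 1/(t2/(t3*t4)))
       \<or> (t1+1/t1) = (t2*(t3/t4) + 1/(t2*(t3/t4))) \<or> (t1+1/t1) = (t2/(t3/t4) + 1/(t2/(t3/t4)))"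
      using Fpq unfolding Ep Eq by (simp only: mult_eq_0_iff right_minus_eq) blast
    then obtain v where v: "v \<in> {t2*(t3*t4), t2/(t3*t4), t2*(t3/t4), t2/(t3/t4)}"
      "t1 + 1/t1 = v + 1/v" by blast
    have "v \<noteq> 0" using v(1) nz by auto
    then have tv1: "t1 = v \<or> t1 * v = 1" using tv[OF nz(1) _ v(2)] by blast
    have e1: "E (\<kappa> 1) = t1" and e2: "E (\<kappa> 2) = t2" and e3: "E (\<kappa> 3) = t3" and e4: "E (\<kappa> 4) = - t4"
      by (simp_all add: t1_def t2_def t3_def t4_def)
    have m1: "(-1::complex) \<in> {1,-1}" and p1: "(1::complex) \<in> {1,-1}" by simp_all
    from v(1) consider "v = t2*(t3*t4)" | "v = t2/(t3*t4)" | "v = t2*(t3/t4)" | "v = t2/(t3/t4)" by blast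
    then show ?thesis
    proof cases
      case 1
      from tv1 show ?thesis
      proof
        assume h: "t1 = v"
        show ?thesis apply (rule Ewall[OF m1 m1 m1])
          using h 1 nz unfolding Em mult_1 e1 e2 e3 e4 by (simp add: field_simps)
      next
        assume h: "t1 * v = 1"
        show ?thesis apply (rule Ewall[OF p1 p1 p1])
          using h 1 nz unfolding Em mult_1 e1 e2 e3 e4 by (simp add: field_simps)
      qed
    next
      case 2
      from tv1 show ?thesis
      proof
        assume h: "t1 = v"
        show ?thesis apply (rule Ewall[OF m1 p1 p1])
          using h 2 nz unfolding Em mult_1 e1 e2 e3 e4 by (simp add: field_simps)
      next
        assume h: "t1 * v = 1"
        show ?thesis apply (rule Ewall[OF p1 m1 m1])
          using h 2 nz unfolding Em mult_1 e1 e2 e3 e4 by (simp add: field_simps)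
      qed
    next
      case 3
      from tv1 show ?thesis
      proof
        assume h: "t1 = v"
        show ?thesis apply (rule Ewall[OF m1 m1 p1])
          using h 3 nz unfolding Em mult_1 e1 e2 e3 e4 by (simp add: field_simps)
      next
        assume h: "t1 * v = 1"
        show ?thesis apply (rule Ewall[OF p1 p1 m1])
          using h 3 nz unfolding Em mult_1 e1 e2 e3 e4 by (simp add: field_simps)
      qed
    next
      case 4
      from tv1 show ?thesis
      proof
        assume h: "t1 = v"
        show ?thesis apply (rule Ewall[OF m1 p1 m1])
          using h 4 nz unfolding Em mult_1 e1 e2 e3 e4 by (simp add: field_simps)
      next
        assume h: "t1 * v = 1"
        show ?thesis apply (rule Ewall[OF p1 m1 p1])
          using h 4 nz unfolding Em mult_1 e1 e2 e3 e4 by (simp add: field_simps)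
      qed
    qed
  qed
qed

lemma Es_sym: "s \<in> {1,-1::complex} \<Longrightarrow> E (s*k) + 1/E (s*k) = E k + 1/E k"
  by (auto simp: E_neg inverse_eq_divide)

lemma bwd: assumes "\<kappa> \<in> Wall" shows "\<exists>x1 x2 x3. isPhi (rh \<kappa>) x1 x2 x3"
proof -
  have sq: "\<And>t::complex. t = 1 \<or> t = -1 \<Longrightarrow> t + 1/t = 2*t" by auto
  from assms consider (I) i where "i \<in> {1,2,3,4::nat}" "\<kappa> i \<in> \<int>"
    | (S) s2 s3 s4 m where "s2 \<in> {1,-1::complex}" "s3 \<in> {1,-1::complex}" "s4 \<in> {1,-1::complex}"
        "\<kappa> 1 + s2 * \<kappa> 2 + s3 * \<kappa> 3 + s4 * \<kappa> 4 = of_int (2 * m + 1)"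
    unfolding Wall_def by blast
  then show ?thesis
  proof cases
    case I
    have Ei: "E (\<kappa> i) = 1 \<or> E (\<kappa> i) = -1" using E_int I(2) by blast
    from I(1) consider "i = 1" | "i = 2" | "i = 3" | "i = 4" by blast
    then show ?thesis
    proof cases
      case 1
      have "E (\<kappa> 1) + 1/E (\<kappa> 1) = 2 * E (\<kappa> 1)" using Ei 1 sq by blast
      then show ?thesis unfolding rh_E using pt1[of "E (\<kappa> 1)"] Ei 1 by metis
    next
      case 2
      have "E (\<kappa> 2) + 1/E (\<kappa> 2) = 2 * E (\<kappa> 2)" using Ei 2 sq by blast
      then show ?thesis unfolding rh_E using pt2[of "E (\<kappa> 2)"] Ei 2 by metis
    next
      case 3
      have "E (\<kappa> 3) + 1/E (\<kappa> 3) = 2 * E (\<kappa> 3)" using Ei 3 sq by blast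
      then show ?thesis unfolding rh_E using pt3[of "E (\<kappa> 3)"] Ei 3 by metis
    next
      case 4
      have m: "- E (\<kappa> 4) = 1 \<or> - E (\<kappa> 4) = -1" using Ei 4 by auto
      have "- E (\<kappa> 4) + 1/(- E (\<kappa> 4)) = 2 * (- E (\<kappa> 4))" using m sq by blast
      then show ?thesis unfolding rh_E using pt4[of "- E (\<kappa> 4)"] m by metis
    qed
  next
    case S
    define u1 where "u1 = E (\<kappa> 1)"
    define u2 where "u2 = E (s2 * \<kappa> 2)"
    define u3 where "u3 = E (s3 * \<kappa> 3)"
    define u4 where "u4 = - E (s4 * \<kappa> 4)"
    have "E (\<kappa> 1 + s2 * \<kappa> 2 + s3 * \<kappa> 3 + s4 * \<kappa> 4) = -1" using E_odd S(4) by blast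
    then have pr: "u1*u2*u3*u4 = 1" by (simp add: u1_def u2_def u3_def u4_def E_add)
    have nz: "u2 \<noteq> 0" "u3 \<noteq> 0" "u4 \<noteq> 0" by (simp_all add: u2_def u3_def u4_def E_nz)
    have a2: "u2 + 1/u2 = E (\<kappa> 2) + 1/E (\<kappa> 2)" unfolding u2_def using Es_sym S(1) .
    have a3: "u3 + 1/u3 = E (\<kappa> 3) + 1/E (\<kappa> 3)" unfolding u3_def using Es_sym S(2) .
    have a4': "E (s4 * \<kappa> 4) + 1/E (s4 * \<kappa> 4) = E (\<kappa> 4) + 1/E (\<kappa> 4)" using Es_sym S(3) .
    have a4: "u4 + 1/u4 = - E (\<kappa> 4) + 1/(- E (\<kappa> 4))" unfolding u4_def using a4'
      by (simp add: algebra_simps)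
    have "isPhi (thA (u1+1/u1) (u2+1/u2) (u3+1/u3) (u4+1/u4)) (u1*u4+u2*u3) (u2*u4+u1*u3) (u3*u4+u1*u2)"
      by (rule pt_prod[OF nz pr])
    then show ?thesis unfolding rh_E a2 a3 a4 u1_def[symmetric] by blast
  qed
qed

lemma part2: "smooth_everywhere (rh \<kappa>) \<longleftrightarrow> \<kappa> \<notin> Wall"
  unfolding smooth_iff using fwd bwd by blast

theorem lemma5p2:
  shows "(\<forall>\<theta>. smooth_near_L \<theta>) \<and>
         (\<forall>\<kappa>\<in>Kset. smooth_everywhere (rh \<kappa>) \<longleftrightarrow> \<kappa> \<in> Kset - Wall)"
  using part1 part2 by blast

end
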